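(* Let $q$ be a prime power, $h\ge 2$ and $v$ integers, and let $\mathcal{S}'$ be a spanning projective $2h$-cylinder in $\mathrm{PG}(v-1,q)$. Let $\mathcal{S}$ be the set of points of $\mathrm{PG}(v-1,q^h)$ obtained by taking, for each point $\langle x\rangle_{\mathbb{F}_q}\in\mathcal{S}'$ (with $x\in\mathbb{F}_q^v\subseteq\mathbb{F}_{q^h}^v$), the point $\langle x\rangle_{\mathbb{F}_{q^h}}$. Then $\mathcal{S}$ is a spanning set of $(q^h)^2$ points in $\mathrm{PG}(v-1,q^h)$ which is $q^h$-divisible but is not a $2$-cylinder (over $\mathbb{F}_{q^h}$).
   Context: For a prime power $Q$, $\mathrm{PG}(v-1,Q)$ is the projective space of $\mathbb{F}_Q^v$; a $k$-space is a $k$-dimensional subspace (points are $1$-spaces, hyperplanes $(v-1)$-spaces). A set $\mathcal{S}$ of points is spanning if its points span $\mathbb{F}_Q^v$, and it is $Q^r$-divisible if $|\mathcal{S}\cap H|\equiv|\mathcal{S}|\pmod{Q^r}$ for every hyperplane $H$. Over $\mathbb{F}_Q$, an $(r+1)$-cylinder is a multiset of $Q^{r+1}$ points which arises as the union (counted with multiplicity) of the point sets $L_1\setminus F,\dots,L_Q\setminus F$, where $L_1,\dots,L_Q$ are $(r+1)$-spaces and $F$ is an $r$-space contained in every $L_i$ ($L_i\setminus F$ denotes the set of points of $L_i$ not in $F$); it is projective if this multiset is a set, and spanning if its points span $\mathbb{F}_Q^v$. Here $\mathbb{F}_q$ is viewed as a subfield of $\mathbb{F}_{q^h}$. *)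

theory Defs
  imports Main "HOL-Library.Multiset" "HOL-Computational_Algebra.Primes"
begin

text \<open>Vectors of F^v are functions from a finite index type 'n (with CARD('n) = v)
 to a finite field 'a. A subfield K of 'a plays the role of F_q; K = UNIV is F_{q^h}.
 Points of PG(v-1,K) are 1-dimensional K-subspaces of K^v.\<close>

definition subfield :: "'a::field set \<Rightarrow> bool" where
  "subfield K \<longleftrightarrow> 0 \<in> K \<and> 1 \<in> K \<and> (\<forall>a\<in>K. \<forall>b\<in>K. a + b \<in> K \<and> a * b \<in> K)
     \<and> (\<forall>a\<in>K. - a \<in> K) \<and> (\<forall>a\<in>K. a \<noteq> 0 \<longrightarrow> inverse a \<in> K)"

definition Kvec :: "'a::field set \<Rightarrow> ('n \<Rightarrow> 'a) set" where
  "Kvec K = {x. \<forall>i. x i \<in> K}"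

definition ksubspace :: "'a::field set \<Rightarrow> ('n \<Rightarrow> 'a) set \<Rightarrow> bool" where
  "ksubspace K U \<longleftrightarrow> U \<subseteq> Kvec K \<and> (\<lambda>i. 0) \<in> U
     \<and> (\<forall>x\<in>U. \<forall>y\<in>U. (\<lambda>i. x i + y i) \<in> U) \<and> (\<forall>c\<in>K. \<forall>x\<in>U. (\<lambda>i. c * x i) \<in> U)"

definition kspan :: "'a::field set \<Rightarrow> ('n \<Rightarrow> 'a) set \<Rightarrow> ('n \<Rightarrow> 'a) set" where
  "kspan K S = \<Inter>{U. ksubspace K U \<and> S \<subseteq> U}"

definition kindep :: "'a::field set \<Rightarrow> ('n \<Rightarrow> 'a) set \<Rightarrow> bool" where
  "kindep K B \<longleftrightarrow> finite B \<and> (\<forall>c. (\<forall>b\<in>B. c b \<in> K) \<and> (\<lambda>i. \<Sum>b\<in>B. c b * b i) = (\<lambda>i. 0)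
      \<longrightarrow> (\<forall>b\<in>B. c b = 0))"

definition kspace :: "'a::field set \<Rightarrow> nat \<Rightarrow> ('n \<Rightarrow> 'a) set \<Rightarrow> bool" where
  "kspace K k U \<longleftrightarrow> ksubspace K U \<and> (\<exists>B. B \<subseteq> U \<and> kindep K B \<and> card B = k \<and> kspan K B = U)"

definition kpoint :: "'a::field set \<Rightarrow> ('n \<Rightarrow> 'a) \<Rightarrow> ('n \<Rightarrow> 'a) set" where
  "kpoint K x = {(\<lambda>i. c * x i) | c. c \<in> K}"

definition kpoints :: "'a::field set \<Rightarrow> ('n \<Rightarrow> 'a) set set" where
  "kpoints K = {kpoint K x | x. x \<in> Kvec K \<and> x \<noteq> (\<lambda>i. 0)}"

definition spanning :: "'a::field set \<Rightarrow> ('n \<Rightarrow> 'a) set set \<Rightarrow> bool" where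
  "spanning K S \<longleftrightarrow> kspan K (\<Union>S) = Kvec K"

definition pg_divisible :: "'a::field set \<Rightarrow> nat \<Rightarrow> ('n::finite \<Rightarrow> 'a) set set \<Rightarrow> bool" where
  "pg_divisible K e S \<longleftrightarrow> (\<forall>H::('n \<Rightarrow> 'a) set. kspace K (card (UNIV :: 'n set) - 1) H \<longrightarrow>
      card {P\<in>S. P \<subseteq> H} mod (card K ^ e) = card S mod (card K ^ e))"

text \<open>(r+1)-cylinder over K (Q = card K): a multiset of Q^(r+1) points which is the sum
 of L_i \ F (i < Q) with L_i (r+1)-spaces all containing the r-space F.\<close>
definition is_cylinder :: "'a::field set \<Rightarrow> nat \<Rightarrow> ('n \<Rightarrow> 'a) set multiset \<Rightarrow> bool" where
  "is_cylinder K r M \<longleftrightarrow> size M = card K ^ (r + 1) \<and>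
     (\<exists>F L. kspace K r F \<and> (\<forall>i<card K. kspace K (r + 1) (L i) \<and> F \<subseteq> L i) \<and>
        M = (\<Sum>i<card K. mset_set {P \<in> kpoints K. P \<subseteq> L i \<and> \<not> P \<subseteq> F}))"

end

theory Submission
  imports Defs "HOL-Library.Function_Algebras" "HOL-Library.FuncSet"
begin

lemma vplus: "(\<lambda>i. x i + y i) = x + y" by (simp add: plus_fun_def)
lemma vzero: "(\<lambda>i. 0) = 0" by (simp add: zero_fun_def)
lemma vminus: "(\<lambda>i. - x i) = - x" by (simp add: fun_Compl_def)
lemma vapp: "(x + y) i = x i + y i" "(0::'n\<Rightarrow>'b::zero) i = 0" "(- z) i = - z i" "(x - y) i = x i - y i"
  by (auto simp: plus_fun_def zero_fun_def fun_Compl_def fun_diff_def)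

definition addgrp :: "('n \<Rightarrow> 'a::ab_group_add) set \<Rightarrow> bool" where
  "addgrp A \<longleftrightarrow> 0 \<in> A \<and> (\<forall>x\<in>A. \<forall>y\<in>A. x + y \<in> A) \<and> (\<forall>x\<in>A. - x \<in> A)"

definition msum :: "('n \<Rightarrow> 'a::ab_group_add) set \<Rightarrow> ('n \<Rightarrow> 'a) set \<Rightarrow> ('n \<Rightarrow> 'a) set" where
  "msum A B = {a + b | a b. a \<in> A \<and> b \<in> B}"

lemma addgrp_diff: "addgrp A \<Longrightarrow> x \<in> A \<Longrightarrow> y \<in> A \<Longrightarrow> x - y \<in> A"
  unfolding addgrp_def by (metis diff_conv_add_uminus)

lemma card_sum_inter:
  assumes fA: "finite A" and fB: "finite B" and gA: "addgrp A" and gB: "addgrp B"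
  shows "card A * card B = card (msum A B) * card (A \<inter> B)"
proof -
  define fib where "fib s = {p \<in> A \<times> B. fst p + snd p = s}" for s
  have U: "A \<times> B = (\<Union>s\<in>msum A B. fib s)"
    unfolding fib_def msum_def by fastforce
  have fm: "finite (msum A B)"
  proof -
    have "msum A B = (\<lambda>p. fst p + snd p) ` (A \<times> B)" unfolding msum_def by force
    thus ?thesis using fA fB by simp
  qed
  have cf: "card (fib s) = card (A \<inter> B)" if s: "s \<in> msum A B" for s
  proof -
    obtain a0 b0 where a0: "a0 \<in> A" and b0: "b0 \<in> B" and sab: "s = a0 + b0"
      using s unfolding msum_def by auto
    have "bij_betw (\<lambda>d. (a0 + d, b0 - d)) (A \<inter> B) (fib s)"
    proof (rule bij_betw_byWitness[where f'="\<lambda>p. fst p - a0"])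
      show "\<forall>a\<in>A \<inter> B. fst (a0 + a, b0 - a) - a0 = a" by simp
      show "\<forall>a'\<in>fib s. (a0 + (fst a' - a0), b0 - (fst a' - a0)) = a'"
        unfolding fib_def sab by (auto simp: algebra_simps prod_eq_iff)
      show "(\<lambda>d. (a0 + d, b0 - d)) ` (A \<inter> B) \<subseteq> fib s"
        unfolding fib_def sab using gA gB a0 b0 addgrp_diff
        by (auto simp: addgrp_def)
      show "(\<lambda>p. fst p - a0) ` fib s \<subseteq> A \<inter> B"
      proof
        fix d assume "d \<in> (\<lambda>p. fst p - a0) ` fib s"
        then obtain a b where ab: "a \<in> A" "b \<in> B" "a + b = a0 + b0" and d: "d = a - a0"
          unfolding fib_def sab by auto
        have "d = b0 - b" using ab(3) d by (simp add: algebra_simps) (metis add_diff_cancel_left' add.commute diff_diff_eq2 diff_add_cancel)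
        hence "d \<in> B" using ab b0 gB addgrp_diff by simp
        moreover have "d \<in> A" using d ab a0 gA addgrp_diff by simp
        ultimately show "d \<in> A \<inter> B" by simp
      qed
    qed
    thus ?thesis by (simp add: bij_betw_same_card)
  qed
  have "card (A \<times> B) = (\<Sum>s\<in>msum A B. card (fib s))"
    unfolding U
  proof (rule card_UN_disjoint[OF fm])
    show "\<forall>i\<in>msum A B. finite (fib i)" using fA fB unfolding fib_def by auto
    show "\<forall>i\<in>msum A B. \<forall>j\<in>msum A B. i \<noteq> j \<longrightarrow> fib i \<inter> fib j = {}"
      unfolding fib_def by auto
  qed
  also have "\<dots> = card (msum A B) * card (A \<inter> B)" using cf by simp
  finally show ?thesis by (simp add: card_cartesian_product)
qed

lemma ksubspace_iff: "ksubspace K U \<longleftrightarrow> U \<subseteq> Kvec K \<and> 0 \<in> U \<and> (\<forall>x\<in>U. \<forall>y\<in>U. x + y \<in> U) \<and> (\<forall>c\<in>K. \<forall>x\<in>U. (\<lambda>i. c * x i) \<in> U)"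
  unfolding ksubspace_def plus_fun_def zero_fun_def ..

context fixes K :: "'a::field set" assumes sf: "subfield K"
begin
lemma sf0: "0 \<in> K" and sf1: "1 \<in> K" and sf_add: "a \<in> K \<Longrightarrow> b \<in> K \<Longrightarrow> a + b \<in> K"
  and sf_mult: "a \<in> K \<Longrightarrow> b \<in> K \<Longrightarrow> a * b \<in> K"
  and sf_neg: "a \<in> K \<Longrightarrow> - a \<in> K" and sf_inv: "a \<in> K \<Longrightarrow> inverse a \<in> K"
  using sf unfolding subfield_def by (blast, blast, blast, blast, blast, metis inverse_zero)
lemma sf_diff: "a \<in> K \<Longrightarrow> b \<in> K \<Longrightarrow> a - b \<in> K"
  using sf_add sf_neg by (metis diff_conv_add_uminus)
lemma sf_div: "a \<in> K \<Longrightarrow> b \<in> K \<Longrightarrow> a / b \<in> K"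
  using sf_mult sf_inv by (metis divide_inverse)
lemma sf_sum: "(\<And>x. x \<in> A \<Longrightarrow> f x \<in> K) \<Longrightarrow> sum f A \<in> K"
proof (induction A rule: infinite_finite_induct)
  case (infinite A) then show ?case using sf0 by (metis sum.infinite)
next
  case empty then show ?case using sf0 by (metis sum.empty)
next
  case (insert x F) then show ?case using sf_add by (metis insertCI sum.insert)
qed

lemma Kvec_add: "x \<in> Kvec K \<Longrightarrow> y \<in> Kvec K \<Longrightarrow> x + y \<in> Kvec K"
  unfolding Kvec_def using sf_add by (simp add: plus_fun_def)
lemma Kvec_smult: "c \<in> K \<Longrightarrow> x \<in> Kvec K \<Longrightarrow> (\<lambda>i. c * x i) \<in> Kvec K"
  unfolding Kvec_def using sf_mult by simp
lemma ksubspace_Kvec: "ksubspace K (Kvec K)"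
  unfolding ksubspace_iff
proof (intro conjI ballI subset_refl)
  show "0 \<in> Kvec K" using sf0 unfolding Kvec_def by simp
qed (simp_all add: Kvec_add Kvec_smult)
end

context fixes K :: "'a::field set" and U :: "('n \<Rightarrow> 'a) set" assumes ks: "ksubspace K U"
begin
lemma ks0: "0 \<in> U" using ks unfolding ksubspace_iff by blast
lemma ks_add: "x \<in> U \<Longrightarrow> y \<in> U \<Longrightarrow> x + y \<in> U" using ks unfolding ksubspace_iff by blast
lemma ks_smult: "c \<in> K \<Longrightarrow> x \<in> U \<Longrightarrow> (\<lambda>i. c * x i) \<in> U" using ks unfolding ksubspace_iff by blast
lemma ks_Kvec: "U \<subseteq> Kvec K" using ks unfolding ksubspace_iff by blast
lemma ks_sum: "(\<And>a. a \<in> A \<Longrightarrow> f a \<in> U) \<Longrightarrow> sum f A \<in> U"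
proof (induction A rule: infinite_finite_induct)
  case (infinite A) then show ?case using ks0 by (simp add: zero_fun_def)
next
  case empty then show ?case using ks0 by (simp add: zero_fun_def)
next
  case (insert x F) then show ?case using ks_add by (metis insertCI sum.insert)
qed
end

lemma ks_neg: "subfield K \<Longrightarrow> ksubspace K U \<Longrightarrow> x \<in> U \<Longrightarrow> - x \<in> U"
  using ks_smult[of K U "-1" x] sf_neg[of K 1] sf1[of K] by (simp add: fun_Compl_def)

lemma ks_addgrp: "subfield K \<Longrightarrow> ksubspace K U \<Longrightarrow> addgrp U"
  unfolding addgrp_def using ks0 ks_add ks_neg by blast

lemma ks_diff: "subfield K \<Longrightarrow> ksubspace K U \<Longrightarrow> x \<in> U \<Longrightarrow> y \<in> U \<Longrightarrow> x - y \<in> U"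
  using ks_addgrp addgrp_diff by blast

lemma sum_fun_apply: "(sum f A) i = (\<Sum>a\<in>A. f a i)"
  by (induction A rule: infinite_finite_induct) (auto simp: vapp)

lemma ks_inter: "ksubspace K U \<Longrightarrow> ksubspace K V \<Longrightarrow> ksubspace K (U \<inter> V)"
  unfolding ksubspace_iff by blast

lemma ks_msum: "ksubspace K U \<Longrightarrow> ksubspace K V \<Longrightarrow> subfield K \<Longrightarrow> ksubspace K (msum U V)"
proof -
  assume u: "ksubspace K U" and v: "ksubspace K V" and sf: "subfield K"
  show ?thesis unfolding ksubspace_iff
  proof (intro conjI ballI)
    show "msum U V \<subseteq> Kvec K" unfolding msum_def using ks_Kvec[OF u] ks_Kvec[OF v] Kvec_add[OF sf] by blast
    have "0 + 0 \<in> msum U V" unfolding msum_def using ks0[OF u] ks0[OF v] by blast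
    thus "0 \<in> msum U V" by simp
    fix x y assume "x \<in> msum U V" "y \<in> msum U V"
    then obtain a b c d where "a \<in> U" "b \<in> V" "c \<in> U" "d \<in> V" "x = a + b" "y = c + d"
      unfolding msum_def by auto
    hence "x + y = (a + c) + (b + d)" by (simp add: algebra_simps)
    moreover have "a + c \<in> U" "b + d \<in> V" using ks_add[OF u] ks_add[OF v] \<open>a \<in> U\<close> \<open>b \<in> V\<close> \<open>c \<in> U\<close> \<open>d \<in> V\<close> by auto
    ultimately show "x + y \<in> msum U V" unfolding msum_def by blast
  next
    fix c x assume c: "c \<in> K" and "x \<in> msum U V"
    then obtain a b where "a \<in> U" "b \<in> V" "x = a + b" unfolding msum_def by auto
    moreover have "(\<lambda>i. c * x i) = (\<lambda>i. c * a i) + (\<lambda>i. c * b i)" using \<open>x = a + b\<close>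
      by (simp add: plus_fun_def distrib_left)
    ultimately show "(\<lambda>i. c * x i) \<in> msum U V" unfolding msum_def using ks_smult[OF u c] ks_smult[OF v c] by blast
  qed
qed

lemma ks_restrict: "subfield K \<Longrightarrow> ksubspace UNIV H \<Longrightarrow> ksubspace K (H \<inter> Kvec K)"
  using ks_inter[of K H "Kvec K"] ksubspace_Kvec[of K] unfolding ksubspace_iff by (auto simp: Kvec_def)

definition lcs :: "'a::field set \<Rightarrow> ('n \<Rightarrow> 'a) set \<Rightarrow> ('n \<Rightarrow> 'a) set" where
  "lcs K B = {(\<lambda>i. \<Sum>b\<in>B. c b * b i) | c. \<forall>b\<in>B. c b \<in> K}"

lemma lc_as_sum: "(\<lambda>i. \<Sum>b\<in>B. c b * b i) = (\<Sum>b\<in>B. (\<lambda>i. c b * b i))"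
  by (simp add: fun_eq_iff sum_fun_apply)

lemma lcs_mem: "\<forall>b\<in>B. c b \<in> K \<Longrightarrow> (\<lambda>i. \<Sum>b\<in>B. c b * b i) \<in> lcs K B"
  unfolding lcs_def by blast

lemma kspan_lcs:
  assumes sf: "subfield K" and fB: "finite B" and BK: "B \<subseteq> Kvec K"
  shows "kspan K B = lcs K B"
proof
  have ksC: "ksubspace K (lcs K B)" unfolding ksubspace_iff
  proof (intro conjI ballI)
    show "lcs K B \<subseteq> Kvec K" unfolding lcs_def
    proof (clarsimp)
      fix c assume c: "\<forall>b\<in>B. c b \<in> K"
      show "(\<lambda>i. \<Sum>b\<in>B. c b * b i) \<in> Kvec K" unfolding Kvec_def
      proof (clarsimp)
        fix i show "(\<Sum>b\<in>B. c b * b i) \<in> K"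
          by (rule sf_sum[OF sf]) (use BK c in \<open>auto intro: sf_mult[OF sf] simp: Kvec_def\<close>)
      qed
    qed
    have "(\<lambda>i. \<Sum>b\<in>B. (\<lambda>_. 0) b * b i) \<in> lcs K B" by (rule lcs_mem) (simp add: sf0[OF sf])
    thus "0 \<in> lcs K B" by (simp add: zero_fun_def)
    fix x y assume "x \<in> lcs K B" "y \<in> lcs K B"
    then obtain c d where c: "\<forall>b\<in>B. c b \<in> K" "x = (\<lambda>i. \<Sum>b\<in>B. c b * b i)"
      and d: "\<forall>b\<in>B. d b \<in> K" "y = (\<lambda>i. \<Sum>b\<in>B. d b * b i)" unfolding lcs_def by blast
    have "x + y = (\<lambda>i. \<Sum>b\<in>B. (c b + d b) * b i)"
      unfolding c(2) d(2) plus_fun_def by (simp add: distrib_right sum.distrib)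
    moreover have "(\<lambda>i. \<Sum>b\<in>B. (c b + d b) * b i) \<in> lcs K B"
      by (rule lcs_mem) (use c d sf_add[OF sf] in blast)
    ultimately show "x + y \<in> lcs K B" by simp
  next
    fix a x assume a: "a \<in> K" and "x \<in> lcs K B"
    then obtain c where c: "\<forall>b\<in>B. c b \<in> K" "x = (\<lambda>i. \<Sum>b\<in>B. c b * b i)" unfolding lcs_def by blast
    have "(\<lambda>i. a * x i) = (\<lambda>i. \<Sum>b\<in>B. (a * c b) * b i)"
      unfolding c(2) by (simp add: sum_distrib_left mult.assoc)
    moreover have "(\<lambda>i. \<Sum>b\<in>B. (a * c b) * b i) \<in> lcs K B"
      by (rule lcs_mem) (use c a sf_mult[OF sf] in blast)
    ultimately show "(\<lambda>i. a * x i) \<in> lcs K B" by simp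
  qed
  have BC: "B \<subseteq> lcs K B"
  proof
    fix b0 assume b0: "b0 \<in> B"
    have "(\<lambda>i. \<Sum>b\<in>B. (if b = b0 then 1 else 0) * b i) = b0"
    proof
      fix i
      have "(\<Sum>b\<in>B. (if b = b0 then 1 else 0) * b i) = (\<Sum>b\<in>B. if b = b0 then b i else 0)"
        by (rule sum.cong) auto
      also have "\<dots> = b0 i" using b0 fB by (simp add: sum.delta')
      finally show "(\<Sum>b\<in>B. (if b = b0 then 1 else 0) * b i) = b0 i" .
    qed
    moreover have "(\<lambda>i. \<Sum>b\<in>B. (if b = b0 then 1 else 0) * b i) \<in> lcs K B"
      by (rule lcs_mem) (simp add: sf0[OF sf] sf1[OF sf])
    ultimately show "b0 \<in> lcs K B" by simp
  qed
  show "kspan K B \<subseteq> lcs K B" unfolding kspan_def by (rule Inter_lower) (simp add: ksC BC)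
  show "lcs K B \<subseteq> kspan K B" unfolding kspan_def
  proof (intro Inter_greatest subsetI)
    fix U x assume U: "U \<in> {U. ksubspace K U \<and> B \<subseteq> U}" and x: "x \<in> lcs K B"
    then obtain c where c: "\<forall>b\<in>B. c b \<in> K" "x = (\<lambda>i. \<Sum>b\<in>B. c b * b i)" unfolding lcs_def by blast
    have "(\<Sum>b\<in>B. (\<lambda>i. c b * b i)) \<in> U"
    proof (rule ks_sum[of K U])
      show "ksubspace K U" using U by simp
      fix b assume "b \<in> B" thus "(\<lambda>i. c b * b i) \<in> U" using U c ks_smult[of K U] by blast
    qed
    thus "x \<in> U" using c(2) lc_as_sum[of c B] by simp
  qed
qed

lemma Kvec_PiE: "Kvec K = (\<Pi>\<^sub>E i\<in>UNIV. K)"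
  unfolding Kvec_def PiE_UNIV_domain Pi_def by auto

lemma card_Kvec: "finite K \<Longrightarrow> card (Kvec K :: ('n::finite \<Rightarrow> 'a::field) set) = card K ^ card (UNIV :: 'n set)"
  by (simp add: Kvec_PiE card_PiE)

lemma Kvec_UNIV: "Kvec UNIV = UNIV" by (auto simp: Kvec_def)

lemma subfield_UNIV: "subfield UNIV" by (simp add: subfield_def)

lemma card_kspace:
  fixes U :: "('n \<Rightarrow> 'a::field) set"
  assumes sf: "subfield K" and fK: "finite K" and sp: "kspace K k U"
  shows "card U = card K ^ k"
proof -
  obtain B where BU: "B \<subseteq> U" and ind: "kindep K B" and cB: "card B = k" and span: "kspan K B = U"
    and ks: "ksubspace K U"
    using sp unfolding kspace_def by blast
  have fB: "finite B" using ind unfolding kindep_def by blast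
  have BK: "B \<subseteq> Kvec K" using BU ks_Kvec[OF ks] by blast
  define lc where "lc c = (\<lambda>i. \<Sum>b\<in>B. c b * b i)" for c :: "('n \<Rightarrow> 'a) \<Rightarrow> 'a"
  have img: "U = lc ` (\<Pi>\<^sub>E b\<in>B. K)"
  proof -
    have "U = lcs K B" using kspan_lcs[OF sf fB BK] span by simp
    also have "\<dots> = lc ` (\<Pi>\<^sub>E b\<in>B. K)"
    proof
      show "lcs K B \<subseteq> lc ` (\<Pi>\<^sub>E b\<in>B. K)"
      proof
        fix x assume "x \<in> lcs K B"
        then obtain c where c: "\<forall>b\<in>B. c b \<in> K" "x = lc c" unfolding lcs_def lc_def by blast
        have "lc (restrict c B) = lc c" unfolding lc_def by (intro ext sum.cong) auto
        moreover have "restrict c B \<in> (\<Pi>\<^sub>E b\<in>B. K)" using c by simp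
        ultimately show "x \<in> lc ` (\<Pi>\<^sub>E b\<in>B. K)" using c(2) by (metis image_eqI)
      qed
      show "lc ` (\<Pi>\<^sub>E b\<in>B. K) \<subseteq> lcs K B"
      proof
        fix x assume "x \<in> lc ` (\<Pi>\<^sub>E b\<in>B. K)"
        then obtain c where c: "c \<in> (\<Pi>\<^sub>E b\<in>B. K)" "x = lc c" by blast
        have "\<forall>b\<in>B. c b \<in> K" using c(1) by (auto simp: PiE_def Pi_def)
        thus "x \<in> lcs K B" unfolding c(2) lc_def by (rule lcs_mem)
      qed
    qed
    finally show ?thesis .
  qed
  have inj: "inj_on lc (\<Pi>\<^sub>E b\<in>B. K)"
  proof
    fix c d assume c: "c \<in> (\<Pi>\<^sub>E b\<in>B. K)" and d: "d \<in> (\<Pi>\<^sub>E b\<in>B. K)" and eq: "lc c = lc d"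
    have z: "(\<lambda>i. \<Sum>b\<in>B. (c b - d b) * b i) = (\<lambda>i. 0)"
    proof
      fix i
      have "lc c i = lc d i" using eq by simp
      thus "(\<Sum>b\<in>B. (c b - d b) * b i) = 0" unfolding lc_def by (simp add: left_diff_distrib sum_subtractf)
    qed
    have inK: "\<forall>b\<in>B. c b - d b \<in> K" using c d sf_diff[OF sf] by (auto simp: PiE_def Pi_def)
    have "\<forall>b\<in>B. c b - d b = 0"
      using ind unfolding kindep_def using spec[where x="\<lambda>b. c b - d b"] z inK by blast
    thus "c = d" using c d by (intro PiE_ext[of c B "\<lambda>_. K"]) auto
  qed
  have "card U = card (\<Pi>\<^sub>E b\<in>B. K)" using img card_image[OF inj] by simp
  also have "\<dots> = card K ^ k" using fB cB by (simp add: card_PiE)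
  finally show ?thesis .
qed

definition ext :: "'a::field set \<Rightarrow> ('n \<Rightarrow> 'a) set \<Rightarrow> ('n \<Rightarrow> 'a) \<Rightarrow> ('n \<Rightarrow> 'a) set" where
  "ext K V x = {v + (\<lambda>i. c * x i) | v c. v \<in> V \<and> c \<in> K}"

lemma smult_add: "(\<lambda>i. (c::'a::field) * (x + y) i) = (\<lambda>i. c * x i) + (\<lambda>i. c * y i)"
  by (simp add: plus_fun_def distrib_left fun_eq_iff)

lemma ext_sub:
  assumes sf: "subfield K" and V: "ksubspace K V" and U: "ksubspace K U" and VU: "V \<subseteq> U" and x: "x \<in> U"
  shows "ext K V x \<subseteq> U"
proof
  fix y assume "y \<in> ext K V x"
  then obtain v c where vc: "v \<in> V" "c \<in> K" "y = v + (\<lambda>i. c * x i)" unfolding ext_def by blast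
  have "v \<in> U" using vc(1) VU by blast
  moreover have "(\<lambda>i. c * x i) \<in> U" by (rule ks_smult[OF U vc(2) x])
  ultimately show "y \<in> U" unfolding vc(3) by (rule ks_add[OF U])
qed

lemma ext_card:
  assumes sf: "subfield K" and V: "ksubspace K V" and fV: "finite V" and fK: "finite K" and xV: "x \<notin> V"
  shows "card (ext K V x) = card K * card V"
proof -
  define A where "A c = (\<lambda>v. v + (\<lambda>i. c * x i)) ` V" for c
  have e: "ext K V x = (\<Union>c\<in>K. A c)" unfolding ext_def A_def by blast
  have "card (\<Union>c\<in>K. A c) = (\<Sum>c\<in>K. card (A c))"
  proof (rule card_UN_disjoint[OF fK])
    show "\<forall>i\<in>K. finite (A i)" unfolding A_def using fV by simp
    show "\<forall>i\<in>K. \<forall>j\<in>K. i \<noteq> j \<longrightarrow> A i \<inter> A j = {}"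
    proof (intro ballI impI)
      fix c d assume c: "c \<in> K" and d: "d \<in> K" and cd: "c \<noteq> d"
      show "A c \<inter> A d = {}"
      proof (rule ccontr)
        assume "A c \<inter> A d \<noteq> {}"
        then obtain v w where v: "v \<in> V" and w: "w \<in> V" and eq: "v + (\<lambda>i. c * x i) = w + (\<lambda>i. d * x i)"
          unfolding A_def by blast
        have "w - v \<in> V" by (rule ks_diff[OF sf V w v])
        moreover have "inverse (c - d) \<in> K" by (rule sf_inv[OF sf sf_diff[OF sf c d]])
        ultimately have "(\<lambda>i. inverse (c - d) * (w - v) i) \<in> V"
          using ks_smult[OF V] by blast
        moreover have "(\<lambda>i. inverse (c - d) * (w - v) i) = x"
        proof
          fix i
          have "v i + c * x i = w i + d * x i" using fun_cong[OF eq, of i] by simp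
          hence "(w - v) i = (c - d) * x i" by (simp add: algebra_simps)
          thus "inverse (c - d) * (w - v) i = x i" using cd by simp
        qed
        ultimately show False using xV by simp
      qed
    qed
  qed
  also have "\<dots> = (\<Sum>c\<in>K. card V)"
  proof (rule sum.cong)
    fix c assume "c \<in> K"
    show "card (A c) = card V" unfolding A_def by (rule card_image) (simp add: inj_on_def)
  qed simp
  finally show ?thesis using e by simp
qed

lemma ext_ks:
  assumes sf: "subfield K" and V: "ksubspace K V" and x: "x \<in> Kvec K"
  shows "ksubspace K (ext K V x)"
  unfolding ksubspace_iff
proof (intro conjI ballI)
  show "ext K V x \<subseteq> Kvec K" unfolding ext_def using ks_Kvec[OF V] Kvec_add[OF sf] Kvec_smult[OF sf] x by blast
  have m: "0 + (\<lambda>i. 0 * x i) \<in> ext K V x" unfolding ext_def using ks0[OF V] sf0[OF sf] by blast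
  have e0: "0 + (\<lambda>i. 0 * x i) = 0" by (simp add: fun_eq_iff)
  show "0 \<in> ext K V x" using m unfolding e0 .
next
  fix y z assume "y \<in> ext K V x" "z \<in> ext K V x"
  then obtain v c w d where "v \<in> V" "c \<in> K" "w \<in> V" "d \<in> K" "y = v + (\<lambda>i. c * x i)" "z = w + (\<lambda>i. d * x i)"
    unfolding ext_def by blast
  moreover have "(v + (\<lambda>i. c * x i)) + (w + (\<lambda>i. d * x i)) = (v + w) + (\<lambda>i. (c + d) * x i)"
    by (simp add: fun_eq_iff algebra_simps)
  ultimately show "y + z \<in> ext K V x" unfolding ext_def using ks_add[OF V] sf_add[OF sf] by blast
next
  fix a y assume a: "a \<in> K" and "y \<in> ext K V x"
  then obtain v c where "v \<in> V" "c \<in> K" "y = v + (\<lambda>i. c * x i)"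
    unfolding ext_def by blast
  moreover have "(\<lambda>i. a * (v + (\<lambda>i. c * x i)) i) = (\<lambda>i. a * v i) + (\<lambda>i. (a * c) * x i)"
    by (simp add: fun_eq_iff algebra_simps)
  ultimately show "(\<lambda>i. a * y i) \<in> ext K V x" unfolding ext_def using ks_smult[OF V] sf_mult[OF sf] a by blast
qed

lemma ext_mem: "subfield K \<Longrightarrow> ksubspace K V \<Longrightarrow> x \<in> ext K V x"
proof -
  assume sf: "subfield K" and V: "ksubspace K V"
  have m: "0 + (\<lambda>i. 1 * x i) \<in> ext K V x" unfolding ext_def using ks0[OF V] sf1[OF sf] by blast
  have e0: "0 + (\<lambda>i. 1 * x i) = x" by (simp add: fun_eq_iff)
  show ?thesis using m unfolding e0 .
qed

lemma ks_zero_space: "subfield K \<Longrightarrow> ksubspace K {0}"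
  unfolding ksubspace_iff using sf0[of K] by (simp add: Kvec_def zero_fun_def)

lemma pow_bound:
  assumes fU: "finite U" and V: "V \<subseteq> U" "card V = q ^ d" and q2: "(q::nat) \<ge> 2"
  shows "d \<le> card U"
proof -
  have "d < 2 ^ d" by (rule less_exp)
  also have "(2::nat) ^ d \<le> q ^ d" by (rule power_mono[OF q2]) simp
  also have "q ^ d \<le> card U" using card_mono[OF fU V(1)] V(2) by simp
  finally show ?thesis by simp
qed

lemma ks_card_pow:
  assumes sf: "subfield K" and fK: "finite K" and q2: "card K \<ge> 2" and U: "ksubspace K U" and fU: "finite U"
  shows "\<exists>d. card U = card K ^ d"
proof -
  define P where "P d \<longleftrightarrow> (\<exists>V. ksubspace K V \<and> V \<subseteq> U \<and> card V = card K ^ d)" for d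
  have P0: "P 0" unfolding P_def
  proof (intro exI conjI)
    show "ksubspace K {0}" by (rule ks_zero_space[OF sf])
    show "{0} \<subseteq> U" using ks0[OF U] by simp
    show "card {0} = card K ^ 0" by simp
  qed
  have bound: "d \<le> card U" if Pd: "P d" for d
  proof -
    from Pd obtain V where V: "V \<subseteq> U" "card V = card K ^ d" unfolding P_def by blast
    show ?thesis by (rule pow_bound[OF fU V q2])
  qed
  define d where "d = (GREATEST d. P d)"
  have Pd: "P d" unfolding d_def using P0 bound by (rule GreatestI_nat)
  then obtain V where V: "ksubspace K V" "V \<subseteq> U" "card V = card K ^ d" unfolding P_def by blast
  have "V = U"
  proof (rule ccontr)
    assume "V \<noteq> U"
    then obtain x where x: "x \<in> U" "x \<notin> V" using V(2) by blast
    have fV: "finite V" using V(2) fU finite_subset by blast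
    have "card (ext K V x) = card K ^ Suc d" using ext_card[OF sf V(1) fV fK x(2)] V(3) by simp
    moreover have "ksubspace K (ext K V x)" using ext_ks[OF sf V(1)] x(1) ks_Kvec[OF U] by blast
    moreover have "ext K V x \<subseteq> U" using ext_sub[OF sf V(1) U V(2) x(1)] .
    ultimately have "P (Suc d)" unfolding P_def by blast
    hence "Suc d \<le> d" unfolding d_def using bound by (rule Greatest_le_nat)
    thus False by simp
  qed
  thus ?thesis using V(3) by blast
qed

context fixes K :: "'a::field set" assumes sf: "subfield K"
begin

lemma kp_self: "x \<in> kpoint K x"
proof -
  have "(\<lambda>i. 1 * x i) \<in> kpoint K x" unfolding kpoint_def using sf1[OF sf] by blast
  thus ?thesis by simp
qed

lemma kp_zero: "0 \<in> kpoint K x"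
proof -
  have "(\<lambda>i. 0 * x i) \<in> kpoint K x" unfolding kpoint_def using sf0[OF sf] by blast
  moreover have "(\<lambda>i. 0 * x i) = 0" by (simp add: fun_eq_iff)
  ultimately show ?thesis by simp
qed

lemma kp_sub_iff: "ksubspace K A \<Longrightarrow> kpoint K x \<subseteq> A \<longleftrightarrow> x \<in> A"
  using kp_self ks_smult[of K A] unfolding kpoint_def by blast

lemma kp_scale: assumes c: "c \<in> K" "c \<noteq> 0" shows "kpoint K (\<lambda>i. c * x i) = kpoint K x"
proof
  show "kpoint K (\<lambda>i. c * x i) \<subseteq> kpoint K x"
  proof
    fix y assume "y \<in> kpoint K (\<lambda>i. c * x i)"
    then obtain d where d: "d \<in> K" "y = (\<lambda>i. d * (c * x i))" unfolding kpoint_def by blast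
    have "y = (\<lambda>i. (d * c) * x i)" using d(2) by (simp add: mult.assoc)
    thus "y \<in> kpoint K x" unfolding kpoint_def using sf_mult[OF sf d(1) c(1)] by blast
  qed
  show "kpoint K x \<subseteq> kpoint K (\<lambda>i. c * x i)"
  proof
    fix y assume "y \<in> kpoint K x"
    then obtain d where d: "d \<in> K" "y = (\<lambda>i. d * x i)" unfolding kpoint_def by blast
    have "y = (\<lambda>i. (d * inverse c) * (c * x i))" using d(2) c(2) by (simp add: fun_eq_iff)
    thus "y \<in> kpoint K (\<lambda>i. c * x i)" unfolding kpoint_def using sf_mult[OF sf d(1) sf_inv[OF sf c(1)]] by blast
  qed
qed

lemma kp_same: assumes z: "z \<in> kpoint K x" "z \<noteq> 0" shows "kpoint K z = kpoint K x"
proof -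
  obtain c where c: "c \<in> K" "z = (\<lambda>i. c * x i)" using z(1) unfolding kpoint_def by blast
  have "c \<noteq> 0" using c(2) z(2) by (auto simp: fun_eq_iff zero_fun_def)
  thus ?thesis using kp_scale[OF c(1)] c(2) by simp
qed

lemma kp_card: assumes fK: "finite K" and x: "x \<noteq> 0" shows "card (kpoint K x - {0}) = card K - 1"
proof -
  have e: "kpoint K x - {0} = (\<lambda>c. (\<lambda>i. c * x i)) ` (K - {0})"
  proof
    show "kpoint K x - {0} \<subseteq> (\<lambda>c. (\<lambda>i. c * x i)) ` (K - {0})"
    proof
      fix y assume y: "y \<in> kpoint K x - {0}"
      then obtain c where c: "c \<in> K" "y = (\<lambda>i. c * x i)" unfolding kpoint_def by blast
      have "c \<noteq> 0" using c(2) y by (auto simp: fun_eq_iff zero_fun_def)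
      thus "y \<in> (\<lambda>c. (\<lambda>i. c * x i)) ` (K - {0})" using c by blast
    qed
    show "(\<lambda>c. (\<lambda>i. c * x i)) ` (K - {0}) \<subseteq> kpoint K x - {0}"
    proof
      fix y assume "y \<in> (\<lambda>c. (\<lambda>i. c * x i)) ` (K - {0})"
      then obtain c where c: "c \<in> K" "c \<noteq> 0" "y = (\<lambda>i. c * x i)" by blast
      have "y \<noteq> 0" using c(2,3) x by (auto simp: fun_eq_iff zero_fun_def)
      thus "y \<in> kpoint K x - {0}" using c unfolding kpoint_def by blast
    qed
  qed
  obtain j where j: "x j \<noteq> 0" using x by (auto simp: fun_eq_iff zero_fun_def)
  have "inj_on (\<lambda>c. (\<lambda>i. c * x i)) (K - {0})"
  proof
    fix c d assume "(\<lambda>i. c * x i) = (\<lambda>i. d * x i)"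
    hence "c * x j = d * x j" by (rule fun_cong)
    thus "c = d" using j by simp
  qed
  hence "card (kpoint K x - {0}) = card (K - {0})" using e card_image by metis
  also have "\<dots> = card K - 1" using sf0[OF sf] fK by simp
  finally show ?thesis .
qed

lemma count_points:
  assumes fK: "finite K" and fX: "finite X" and X0: "0 \<notin> X"
    and cl: "\<And>x c. x \<in> X \<Longrightarrow> c \<in> K \<Longrightarrow> c \<noteq> 0 \<Longrightarrow> (\<lambda>i. c * x i) \<in> X"
  shows "(card K - 1) * card (kpoint K ` X) = card X"
proof -
  define C where "C = (\<lambda>P. P - {0}) ` (kpoint K ` X)"
  have UC: "\<Union>C = X"
  proof
    show "\<Union>C \<subseteq> X"
    proof
      fix y assume "y \<in> \<Union>C"
      then obtain x where x: "x \<in> X" "y \<in> kpoint K x" "y \<noteq> 0" unfolding C_def by blast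
      then obtain c where c: "c \<in> K" "y = (\<lambda>i. c * x i)" unfolding kpoint_def by blast
      have "c \<noteq> 0" using c(2) x(3) by (auto simp: fun_eq_iff zero_fun_def)
      thus "y \<in> X" using cl[OF x(1) c(1)] c(2) by simp
    qed
    show "X \<subseteq> \<Union>C"
    proof
      fix x assume x: "x \<in> X"
      hence "x \<in> kpoint K x - {0}" using kp_self X0 by auto
      thus "x \<in> \<Union>C" unfolding C_def using x by blast
    qed
  qed
  have "(card K - 1) * card C = card (\<Union>C)"
  proof (rule card_partition)
    show "finite C" unfolding C_def using fX by simp
    show "finite (\<Union>C)" using UC fX by simp
    show "\<And>c. c \<in> C \<Longrightarrow> card c = card K - 1"
    proof -
      fix c assume "c \<in> C"
      then obtain x where x: "x \<in> X" "c = kpoint K x - {0}" unfolding C_def by blast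
      have "x \<noteq> 0" using x(1) X0 by auto
      thus "card c = card K - 1" using kp_card[OF fK] x(2) by simp
    qed
    show "\<And>c1 c2. c1 \<in> C \<Longrightarrow> c2 \<in> C \<Longrightarrow> c1 \<noteq> c2 \<Longrightarrow> c1 \<inter> c2 = {}"
    proof -
      fix c1 c2 assume "c1 \<in> C" "c2 \<in> C" "c1 \<noteq> c2"
      then obtain x y where xy: "c1 = kpoint K x - {0}" "c2 = kpoint K y - {0}" and ne: "c1 \<noteq> c2"
        unfolding C_def by blast
      show "c1 \<inter> c2 = {}"
      proof (rule ccontr)
        assume "c1 \<inter> c2 \<noteq> {}"
        then obtain z where z: "z \<in> kpoint K x" "z \<in> kpoint K y" "z \<noteq> 0" using xy by blast
        have "kpoint K x = kpoint K y" using kp_same[OF z(1) z(3)] kp_same[OF z(2) z(3)] by simp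
        thus False using xy ne by simp
      qed
    qed
  qed
  moreover have "card C = card (kpoint K ` X)" unfolding C_def
  proof (rule card_image)
    show "inj_on (\<lambda>P. P - {0}) (kpoint K ` X)"
    proof
      fix P Q assume "P \<in> kpoint K ` X" "Q \<in> kpoint K ` X" and e: "P - {0} = Q - {0}"
      hence "0 \<in> P" "0 \<in> Q" using kp_zero by auto
      thus "P = Q" using e by blast
    qed
  qed
  ultimately show ?thesis using UC by simp
qed

end

lemma kpoints_iff: "P \<in> kpoints K \<longleftrightarrow> (\<exists>x. x \<in> Kvec K \<and> x \<noteq> 0 \<and> P = kpoint K x)"
  unfolding kpoints_def zero_fun_def by blast

locale cyl =
  fixes K :: "'a::{field,finite} set" and M :: "('n::finite \<Rightarrow> 'a) set multiset"
    and q h :: nat and F :: "('n \<Rightarrow> 'a) set" and L :: "nat \<Rightarrow> ('n \<Rightarrow> 'a) set"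
  assumes q2: "q \<ge> 2" and h2: "h \<ge> 2" and sf: "subfield K" and cK: "card K = q"
    and cU: "card (UNIV :: 'a set) = q ^ h"
    and Fsp: "kspace K (2 * h - 1) F" and Lsp: "\<And>i. i < q \<Longrightarrow> kspace K (2 * h) (L i)"
    and FL: "\<And>i. i < q \<Longrightarrow> F \<subseteq> L i"
    and Mdef: "M = (\<Sum>i<q. mset_set {P \<in> kpoints K. P \<subseteq> L i \<and> \<not> P \<subseteq> F})"
    and sz: "size M = q ^ (2 * h)"
    and proj: "\<forall>P. count M P \<le> 1"
    and span: "spanning K (set_mset M)"
begin

definition X :: "nat \<Rightarrow> ('n \<Rightarrow> 'a) set set" where
  "X i = {P \<in> kpoints K. P \<subseteq> L i \<and> \<not> P \<subseteq> F}"

lemma M_X: "M = (\<Sum>i<q. mset_set (X i))" unfolding X_def by (rule Mdef)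

lemma finX: "finite (X i)" by simp

lemma setM: "set_mset M = (\<Union>i\<in>{..<q}. X i)"
  unfolding M_X by (simp add: set_mset_sum)

lemma X_disj: assumes i: "i < q" and j: "j < q" and ij: "i \<noteq> j" shows "X i \<inter> X j = {}"
proof (rule ccontr)
  assume "X i \<inter> X j \<noteq> {}"
  then obtain P where P: "P \<in> X i" "P \<in> X j" by blast
  have "(\<Sum>k\<in>{i,j}. count (mset_set (X k)) P) \<le> (\<Sum>k<q. count (mset_set (X k)) P)"
    by (rule sum_mono2) (use i j in auto)
  moreover have "(\<Sum>k\<in>{i,j}. count (mset_set (X k)) P) = 2" using P ij by simp
  moreover have "(\<Sum>k<q. count (mset_set (X k)) P) = count M P" unfolding M_X by (simp add: count_sum)
  ultimately show False using proj by (metis numeral_le_one_iff order_trans semiring_norm(69))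
qed

lemma card_setM: "card (set_mset M) = q ^ (2 * h)"
proof -
  have "card (set_mset M) = (\<Sum>i<q. card (X i))" unfolding setM
  proof (rule card_UN_disjoint)
    show "\<forall>i\<in>{..<q}. \<forall>j\<in>{..<q}. i \<noteq> j \<longrightarrow> X i \<inter> X j = {}" using X_disj by simp
  qed auto
  also have "\<dots> = size M" unfolding M_X by simp
  finally show ?thesis using sz by simp
qed

lemma setM_kpoints: "set_mset M \<subseteq> kpoints K" unfolding setM X_def by blast

definition Ex :: "('n \<Rightarrow> 'a) set \<Rightarrow> ('n \<Rightarrow> 'a) set" where
  "Ex P = {(\<lambda>i. c * y i) | c y. y \<in> P}"

lemma Ex_kp: "Ex (kpoint K x) = kpoint UNIV x"
proof
  show "Ex (kpoint K x) \<subseteq> kpoint UNIV x"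
  proof
    fix z assume "z \<in> Ex (kpoint K x)"
    then obtain c d where "z = (\<lambda>i. c * (d * x i))" unfolding Ex_def kpoint_def by blast
    hence "z = (\<lambda>i. (c * d) * x i)" by (simp add: mult.assoc)
    thus "z \<in> kpoint UNIV x" unfolding kpoint_def by blast
  qed
  show "kpoint UNIV x \<subseteq> Ex (kpoint K x)"
  proof
    fix z assume "z \<in> kpoint UNIV x"
    then obtain c where c: "z = (\<lambda>i. c * x i)" unfolding kpoint_def by blast
    have "x \<in> kpoint K x" by (rule kp_self[OF sf])
    thus "z \<in> Ex (kpoint K x)" unfolding Ex_def c by blast
  qed
qed

lemma kp_UNIV_eq:
  assumes x: "x \<in> Kvec K" "x \<noteq> 0" and y: "y \<in> Kvec K" "y \<noteq> 0" and e: "kpoint UNIV x = kpoint UNIV y"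
  shows "kpoint K x = kpoint K y"
proof -
  have "y \<in> kpoint UNIV y" by (rule kp_self[OF subfield_UNIV])
  hence "y \<in> kpoint UNIV x" using e by simp
  then obtain c where c: "y = (\<lambda>i. c * x i)" unfolding kpoint_def by blast
  obtain j where j: "x j \<noteq> 0" using x(2) by (auto simp: fun_eq_iff zero_fun_def)
  have "c = y j / x j" using c j by simp
  moreover have "y j \<in> K" "x j \<in> K" using x(1) y(1) unfolding Kvec_def by auto
  ultimately have "c \<in> K" using sf_div[OF sf, of "y j" "x j"] by simp
  hence "y \<in> kpoint K x" using c unfolding kpoint_def by blast
  hence "kpoint K y = kpoint K x" by (rule kp_same[OF sf _ y(2)])
  thus ?thesis by simp
qed

lemma inj_Ex: "inj_on Ex (kpoints K)"
proof
  fix P Q assume P: "P \<in> kpoints K" and Q: "Q \<in> kpoints K" and e: "Ex P = Ex Q"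
  obtain x where x: "x \<in> Kvec K" "x \<noteq> 0" "P = kpoint K x" using P unfolding kpoints_iff by blast
  obtain y where y: "y \<in> Kvec K" "y \<noteq> 0" "Q = kpoint K y" using Q unfolding kpoints_iff by blast
  have "kpoint UNIV x = Ex P" using x(3) Ex_kp[of x] by simp
  also have "\<dots> = Ex Q" by (rule e)
  also have "\<dots> = kpoint UNIV y" using y(3) Ex_kp[of y] by simp
  finally have "kpoint K x = kpoint K y" by (rule kp_UNIV_eq[OF x(1,2) y(1,2)])
  thus "P = Q" using x(3) y(3) by simp
qed

lemma S_eq: "{kpoint UNIV x | x. x \<in> Kvec K \<and> x \<noteq> (\<lambda>i. 0) \<and> kpoint K x \<in> set_mset M} = Ex ` set_mset M"
proof
  show "{kpoint UNIV x | x. x \<in> Kvec K \<and> x \<noteq> (\<lambda>i. 0) \<and> kpoint K x \<in> set_mset M} \<subseteq> Ex ` set_mset M"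
    using Ex_kp by (auto intro!: image_eqI)
  show "Ex ` set_mset M \<subseteq> {kpoint UNIV x | x. x \<in> Kvec K \<and> x \<noteq> (\<lambda>i. 0) \<and> kpoint K x \<in> set_mset M}"
  proof
    fix Z assume "Z \<in> Ex ` set_mset M"
    then obtain P where P: "P \<in> set_mset M" "Z = Ex P" by blast
    then obtain x where x: "x \<in> Kvec K" "x \<noteq> (\<lambda>i. 0)" "P = kpoint K x"
      using setM_kpoints unfolding kpoints_def by blast
    show "Z \<in> {kpoint UNIV x | x. x \<in> Kvec K \<and> x \<noteq> (\<lambda>i. 0) \<and> kpoint K x \<in> set_mset M}"
      using P x Ex_kp by blast
  qed
qed

lemma card_S: "card (Ex ` set_mset M) = q ^ (2 * h)"
proof -
  have "card (Ex ` set_mset M) = card (set_mset M)"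
    by (rule card_image[OF inj_on_subset[OF inj_Ex setM_kpoints]])
  thus ?thesis using card_setM by simp
qed

end

context cyl
begin

lemma fK: "finite K" by simp
lemma q1: "1 < q" using q2 by simp
lemma v1: "card (UNIV :: 'n set) \<ge> 1" using finite_UNIV_card_ge_0 finite_UNIV by (metis Suc_le_eq One_nat_def)

lemma ksF: "ksubspace K F" using Fsp unfolding kspace_def by blast
lemma ksL: "i < q \<Longrightarrow> ksubspace K (L i)" using Lsp unfolding kspace_def by blast
lemma cardF: "card F = q ^ (2 * h - 1)" using card_kspace[OF sf fK Fsp] cK by simp
lemma cardL: "i < q \<Longrightarrow> card (L i) = q ^ (2 * h)" using card_kspace[OF sf fK Lsp] cK by simp

lemma spanningS: "spanning UNIV (Ex ` set_mset M)"
proof -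
  have allU: "U = UNIV" if U: "ksubspace UNIV U" and sub: "\<Union>(Ex ` set_mset M) \<subseteq> U" for U
  proof -
    have W: "ksubspace K (U \<inter> Kvec K)" by (rule ks_restrict[OF sf U])
    have "\<Union>(set_mset M) \<subseteq> U \<inter> Kvec K"
    proof
      fix y assume "y \<in> \<Union>(set_mset M)"
      then obtain P where P: "P \<in> set_mset M" "y \<in> P" by blast
      then obtain x where x: "x \<in> Kvec K" "x \<noteq> 0" "P = kpoint K x" using setM_kpoints kpoints_iff by blast
      obtain c where c: "c \<in> K" "y = (\<lambda>i. c * x i)" using P(2) x(3) unfolding kpoint_def by blast
      have "y \<in> Kvec K" using Kvec_smult[OF sf c(1) x(1)] c(2) by simp
      moreover have "(\<lambda>i. 1 * y i) \<in> Ex P" unfolding Ex_def using P(2) by blast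
      hence "y \<in> Ex P" by simp
      hence "y \<in> U" using sub P(1) by blast
      ultimately show "y \<in> U \<inter> Kvec K" by blast
    qed
    hence "kspan K (\<Union>(set_mset M)) \<subseteq> U \<inter> Kvec K" unfolding kspan_def using W by (intro Inter_lower) simp
    hence KU: "Kvec K \<subseteq> U" using span unfolding spanning_def by simp
    show "U = UNIV"
    proof (intro set_eqI iffI)
      fix z :: "'n \<Rightarrow> 'a" assume "z \<in> UNIV"
      define e where "e j = (\<lambda>i. if i = j then (1::'a) else 0)" for j :: 'n
      have eK: "e j \<in> Kvec K" for j unfolding e_def Kvec_def using sf0[OF sf] sf1[OF sf] by simp
      have "(\<Sum>j\<in>UNIV. (\<lambda>i. z j * e j i)) \<in> U"
      proof (rule ks_sum[OF U])
        fix j show "(\<lambda>i. z j * e j i) \<in> U" using ks_smult[OF U, of "z j" "e j"] eK KU by blast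
      qed
      moreover have "(\<Sum>j\<in>UNIV. (\<lambda>i. z j * e j i)) = z"
      proof
        fix i
        have "(\<Sum>j\<in>UNIV. (\<lambda>i. z j * e j i)) i = (\<Sum>j\<in>UNIV. z j * e j i)" by (rule sum_fun_apply)
        also have "\<dots> = (\<Sum>j\<in>UNIV. if i = j then z j else 0)" unfolding e_def by (rule sum.cong) auto
        also have "\<dots> = z i" by simp
        finally show "(\<Sum>j\<in>UNIV. (\<lambda>i. z j * e j i)) i = z i" .
      qed
      ultimately show "z \<in> U" by simp
    qed simp
  qed
  have "kspan UNIV (\<Union>(Ex ` set_mset M)) = UNIV"
    unfolding kspan_def using allU by blast
  thus ?thesis unfolding spanning_def Kvec_UNIV .
qed

end

locale hyp = cyl K M q h F L for K :: "'a::{field,finite} set" and M :: "('n::finite \<Rightarrow> 'a) set multiset"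
    and q h F L +
  fixes H :: "('n \<Rightarrow> 'a) set"
  assumes Hsp: "kspace UNIV (card (UNIV :: 'n set) - 1) H"
begin

definition "W = H \<inter> Kvec K"

lemma ksH: "ksubspace UNIV H" using Hsp unfolding kspace_def by blast
lemma ksW: "ksubspace K W" unfolding W_def by (rule ks_restrict[OF sf ksH])
lemma cardH: "card H = (q ^ h) ^ (card (UNIV :: 'n set) - 1)" using card_kspace[OF subfield_UNIV _ Hsp] cU by simp
lemma cardKvec: "card (Kvec K :: ('n \<Rightarrow> 'a) set) = q ^ card (UNIV :: 'n set)" using card_Kvec[OF fK, where 'n='n] cK by simp
lemma cardUNIV: "card (UNIV :: ('n \<Rightarrow> 'a) set) = (q ^ h) ^ card (UNIV :: 'n set)"
  using card_Kvec[of "UNIV :: 'a set", where 'n='n] cU by (simp add: Kvec_UNIV)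

lemma cancel_aux: "(a::nat) * c \<le> (b * c) * w \<Longrightarrow> 0 < c \<Longrightarrow> a \<le> b * w"
proof -
  assume 1: "a * c \<le> (b * c) * w" and c: "0 < c"
  have "(b * c) * w = (b * w) * c" by (simp add: mult_ac)
  hence "a * c \<le> (b * w) * c" using 1 by simp
  thus ?thesis using c by simp
qed

lemma Wbound: "q ^ card (UNIV :: 'n set) \<le> q ^ h * card W"
proof -
  define n where "n = card (UNIV :: 'n set)"
  have n1: "n = Suc (n - 1)" using v1 unfolding n_def by simp
  have eq: "card (Kvec K :: ('n \<Rightarrow> 'a) set) * card H = card (msum (Kvec K) H) * card (Kvec K \<inter> H)"
    by (rule card_sum_inter[OF _ _ ks_addgrp[OF sf ksubspace_Kvec[OF sf]] ks_addgrp[OF subfield_UNIV ksH]]) simp_all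
  have ms: "card (msum (Kvec K) H) \<le> (q ^ h) ^ n"
  proof -
    have "card (msum (Kvec K) H) \<le> card (UNIV :: ('n \<Rightarrow> 'a) set)" by (rule card_mono) simp_all
    thus ?thesis using cardUNIV unfolding n_def by simp
  qed
  have KW: "Kvec K \<inter> H = W" unfolding W_def by blast
  have "q ^ n * (q ^ h) ^ (n - 1) = card (msum (Kvec K) H) * card W"
    using eq cardH cardKvec KW unfolding n_def by simp
  also have "\<dots> \<le> (q ^ h) ^ n * card W" using ms by (rule mult_le_mono1)
  also have "(q ^ h) ^ n = q ^ h * (q ^ h) ^ (n - 1)" by (subst n1) simp
  finally have "q ^ n * (q ^ h) ^ (n - 1) \<le> (q ^ h * (q ^ h) ^ (n - 1)) * card W" .
  hence "q ^ n \<le> q ^ h * card W" by (rule cancel_aux) (use q2 in simp)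
  thus ?thesis unfolding n_def .
qed

lemma Abound:
  assumes A: "ksubspace K A"
  shows "card A \<le> q ^ h * card (A \<inter> W)"
proof -
  define n where "n = card (UNIV :: 'n set)"
  have eq: "card A * card W = card (msum A W) * card (A \<inter> W)"
    by (rule card_sum_inter[OF _ _ ks_addgrp[OF sf A] ks_addgrp[OF sf ksW]]) simp_all
  have ms: "card (msum A W) \<le> q ^ n"
  proof -
    have "msum A W \<subseteq> Kvec K" using ks_Kvec[OF ks_msum[OF A ksW sf]] .
    hence "card (msum A W) \<le> card (Kvec K :: ('n \<Rightarrow> 'a) set)" by (intro card_mono) simp_all
    thus ?thesis using cardKvec unfolding n_def by simp
  qed
  have 1: "card A * card W \<le> q ^ n * card (A \<inter> W)"
    unfolding eq using ms by (rule mult_le_mono1)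
  have "card A * q ^ n \<le> card A * (q ^ h * card W)" using Wbound unfolding n_def by (rule mult_le_mono2)
  also have "\<dots> = q ^ h * (card A * card W)" by (simp add: mult_ac)
  also have "\<dots> \<le> q ^ h * (q ^ n * card (A \<inter> W))" using 1 by (rule mult_le_mono2)
  also have "\<dots> = (q ^ h * q ^ n) * card (A \<inter> W)" by (simp add: mult_ac)
  finally have "card A * q ^ n \<le> (q ^ h * q ^ n) * card (A \<inter> W)" .
  thus ?thesis by (rule cancel_aux) (use q2 in simp)
qed

lemma ksFW: "ksubspace K (F \<inter> W)" by (rule ks_inter[OF ksF ksW])

definition "f = card (F \<inter> W)"

lemma f_pow: "\<exists>b. f = q ^ b \<and> h - 1 \<le> b"
proof -
  have "\<exists>b. card (F \<inter> W) = card K ^ b" by (rule ks_card_pow[OF sf fK _ ksFW]) (use q2 cK in simp_all)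
  then obtain b where b: "f = q ^ b" unfolding f_def cK by blast
  have "q ^ (2 * h - 1) \<le> q ^ h * q ^ b" using Abound[OF ksF] cardF b unfolding f_def by simp
  hence "q ^ (2 * h - 1) \<le> q ^ (h + b)" by (simp add: power_add)
  hence "2 * h - 1 \<le> h + b" by (rule power_le_imp_le_exp[OF q1])
  hence "h - 1 \<le> b" by simp
  thus ?thesis using b by blast
qed

end

context hyp
begin

definition "Y i = (L i \<inter> W) - F"
definition "pts i = card {P \<in> X i. P \<subseteq> H}"

lemma W_Kvec: "W \<subseteq> Kvec K" unfolding W_def by blast
lemma W_H: "W \<subseteq> H" unfolding W_def by blast

lemma XH: assumes i: "i < q" shows "{P \<in> X i. P \<subseteq> H} = kpoint K ` Y i"
proof
  show "{P \<in> X i. P \<subseteq> H} \<subseteq> kpoint K ` Y i"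
  proof
    fix P assume "P \<in> {P \<in> X i. P \<subseteq> H}"
    hence P: "P \<in> kpoints K" "P \<subseteq> L i" "\<not> P \<subseteq> F" "P \<subseteq> H" unfolding X_def by auto
    obtain x where x: "x \<in> Kvec K" "x \<noteq> 0" "P = kpoint K x" using P(1) unfolding kpoints_iff by blast
    have xP: "x \<in> P" using x(3) kp_self[OF sf] by simp
    have "x \<in> L i" "x \<in> H" using xP P by auto
    moreover have "x \<notin> F" using P(3) x(3) kp_sub_iff[OF sf ksF] by simp
    ultimately have "x \<in> Y i" using x(1) unfolding Y_def W_def by blast
    thus "P \<in> kpoint K ` Y i" using x(3) by blast
  qed
  show "kpoint K ` Y i \<subseteq> {P \<in> X i. P \<subseteq> H}"
  proof
    fix P assume "P \<in> kpoint K ` Y i"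
    then obtain x where x: "x \<in> L i" "x \<in> W" "x \<notin> F" "P = kpoint K x" unfolding Y_def by blast
    have xK: "x \<in> Kvec K" using x(2) W_Kvec by blast
    have x0: "x \<noteq> 0" using x(3) ks0[OF ksF] by blast
    have "P \<in> kpoints K" unfolding kpoints_iff using xK x0 x(4) by blast
    moreover have "P \<subseteq> L i" using x(1,4) kp_sub_iff[OF sf ksL[OF i]] by simp
    moreover have "\<not> P \<subseteq> F" using x(3,4) kp_sub_iff[OF sf ksF] by simp
    moreover have "P \<subseteq> W" using x(2,4) kp_sub_iff[OF sf ksW] by simp
    ultimately show "P \<in> {P \<in> X i. P \<subseteq> H}" unfolding X_def using W_H by blast
  qed
qed

lemma ksLW: "i < q \<Longrightarrow> ksubspace K (L i \<inter> W)" by (rule ks_inter[OF ksL ksW])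

lemma pts_count: assumes i: "i < q" shows "(q - 1) * pts i = card (Y i)"
proof -
  have "(card K - 1) * card (kpoint K ` Y i) = card (Y i)"
  proof (rule count_points[OF sf fK])
    show "finite (Y i)" by simp
    show "0 \<notin> Y i" unfolding Y_def using ks0[OF ksF] by blast
    fix x c assume x: "x \<in> Y i" and c: "c \<in> K" "c \<noteq> 0"
    have "(\<lambda>j. c * x j) \<in> L i \<inter> W" using x unfolding Y_def using ks_smult[OF ksLW[OF i] c(1)] by blast
    moreover have "(\<lambda>j. c * x j) \<notin> F"
    proof
      assume "(\<lambda>j. c * x j) \<in> F"
      hence "(\<lambda>j. inverse c * (c * x j)) \<in> F" using ks_smult[OF ksF sf_inv[OF sf c(1)]] by blast
      moreover have "(\<lambda>j. inverse c * (c * x j)) = x" using c(2) by (simp add: fun_eq_iff)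
      ultimately have "x \<in> F" by simp
      thus False using x unfolding Y_def by blast
    qed
    ultimately show "(\<lambda>j. c * x j) \<in> Y i" unfolding Y_def by blast
  qed
  thus ?thesis unfolding pts_def XH[OF i] cK .
qed

lemma cardY: assumes i: "i < q" shows "card (Y i) = card (L i \<inter> W) - f"
proof -
  have "Y i = (L i \<inter> W) - (F \<inter> W)" unfolding Y_def by blast
  moreover have "F \<inter> W \<subseteq> L i \<inter> W" using FL[OF i] by blast
  ultimately show ?thesis unfolding f_def by (simp add: card_Diff_subset)
qed

lemma caseA: assumes i: "i < q" and A: "L i \<inter> W \<subseteq> F" shows "pts i = 0"
proof -
  have "Y i = {}" unfolding Y_def using A by blast
  hence "(q - 1) * pts i = 0" using pts_count[OF i] by simp
  thus ?thesis using q2 by simp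
qed

lemma caseB: assumes i: "i < q" and B: "\<not> L i \<inter> W \<subseteq> F" shows "card (L i \<inter> W) = q * f" "pts i = f"
proof -
  obtain x where x: "x \<in> L i \<inter> W" "x \<notin> F" using B by blast
  have ms_sub: "msum (L i \<inter> W) F \<subseteq> L i"
  proof
    fix z assume "z \<in> msum (L i \<inter> W) F"
    then obtain a b where ab: "a \<in> L i \<inter> W" "b \<in> F" "z = a + b" unfolding msum_def by blast
    have "b \<in> L i" using ab(2) FL[OF i] by blast
    thus "z \<in> L i" using ab ks_add[OF ksL[OF i]] by blast
  qed
  have ext_sub: "ext K F x \<subseteq> msum (L i \<inter> W) F"
  proof
    fix z assume "z \<in> ext K F x"
    then obtain v c where vc: "v \<in> F" "c \<in> K" "z = v + (\<lambda>j. c * x j)" unfolding ext_def by blast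
    have "(\<lambda>j. c * x j) \<in> L i \<inter> W" using ks_smult[OF ksLW[OF i] vc(2)] x(1) by blast
    moreover have "z = (\<lambda>j. c * x j) + v" using vc(3) by (simp add: add.commute)
    ultimately show "z \<in> msum (L i \<inter> W) F" unfolding msum_def using vc(1) by blast
  qed
  have cardL': "card (L i) = q * card F" using cardL[OF i] cardF h2
    by (metis Suc_diff_1 Suc_le_eq mult_2 nat_le_iff_add numeral_le_iff power_Suc semiring_norm(69) add_gr_0 zero_less_numeral le_add_diff_inverse2 one_le_numeral order_trans)
  have "card (ext K F x) = q * card F" using ext_card[OF sf ksF _ fK x(2)] cK by simp
  hence "card (L i) \<le> card (msum (L i \<inter> W) F)" using card_mono[OF _ ext_sub] cardL' by simp
  hence msL: "msum (L i \<inter> W) F = L i" using ms_sub card_seteq[of "L i"] by simp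
  have "card (L i \<inter> W) * card F = card (msum (L i \<inter> W) F) * card ((L i \<inter> W) \<inter> F)"
    by (rule card_sum_inter[OF _ _ ks_addgrp[OF sf ksLW[OF i]] ks_addgrp[OF sf ksF]]) simp_all
  also have "(L i \<inter> W) \<inter> F = F \<inter> W" using FL[OF i] by blast
  finally have "card (L i \<inter> W) * card F = (q * f) * card F" unfolding msL cardL' f_def by (simp add: mult_ac)
  moreover have "card F > 0" using cardF q2 by simp
  ultimately show cLW: "card (L i \<inter> W) = q * f" by (metis mult_right_cancel less_not_refl)
  have "(q - 1) * pts i = q * f - f" using pts_count[OF i] cardY[OF i] cLW by simp
  also have "\<dots> = (q - 1) * f" by (simp add: diff_mult_distrib)
  finally show "pts i = f" using q2 by simp
qed

end

context hyp
begin

lemma ExH: assumes P: "P \<in> kpoints K" shows "Ex P \<subseteq> H \<longleftrightarrow> P \<subseteq> H"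
proof -
  obtain x where x: "x \<in> Kvec K" "x \<noteq> 0" "P = kpoint K x" using P unfolding kpoints_iff by blast
  have "Ex P \<subseteq> H \<longleftrightarrow> x \<in> H" using x(3) Ex_kp kp_sub_iff[OF subfield_UNIV ksH] by simp
  moreover have "P \<subseteq> H \<longleftrightarrow> x \<in> H"
  proof
    assume "P \<subseteq> H" thus "x \<in> H" using x(3) kp_self[OF sf] by blast
  next
    assume "x \<in> H" thus "P \<subseteq> H" using x(3) ks_smult[OF ksH] unfolding kpoint_def by blast
  qed
  ultimately show ?thesis by simp
qed

lemma hypcount: "card {P \<in> Ex ` set_mset M. P \<subseteq> H} = (\<Sum>i<q. pts i)"
proof -
  have "{P \<in> Ex ` set_mset M. P \<subseteq> H} = Ex ` {P \<in> set_mset M. P \<subseteq> H}"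
    using ExH setM_kpoints by blast
  hence "card {P \<in> Ex ` set_mset M. P \<subseteq> H} = card {P \<in> set_mset M. P \<subseteq> H}"
    using card_image[OF inj_on_subset[OF inj_Ex]] setM_kpoints by (metis (no_types, lifting) mem_Collect_eq subsetI subset_iff)
  also have "{P \<in> set_mset M. P \<subseteq> H} = (\<Union>i\<in>{..<q}. {P \<in> X i. P \<subseteq> H})" unfolding setM by blast
  also have "card \<dots> = (\<Sum>i<q. card {P \<in> X i. P \<subseteq> H})"
  proof (rule card_UN_disjoint)
    show "\<forall>i\<in>{..<q}. \<forall>j\<in>{..<q}. i \<noteq> j \<longrightarrow> {P \<in> X i. P \<subseteq> H} \<inter> {P \<in> X j. P \<subseteq> H} = {}"
      using X_disj by auto
  qed auto
  finally show ?thesis unfolding pts_def .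
qed

lemma hyp_dvd: "q ^ h dvd card {P \<in> Ex ` set_mset M. P \<subseteq> H}"
proof -
  obtain b where b: "f = q ^ b" "h - 1 \<le> b" using f_pow by blast
  show ?thesis
  proof (cases "\<exists>i<q. L i \<inter> W \<subseteq> F")
    case True
    then obtain i where i: "i < q" "L i \<inter> W \<subseteq> F" by blast
    have "L i \<inter> W \<subseteq> F \<inter> W" using i(2) by blast
    hence "card (L i \<inter> W) \<le> f" unfolding f_def by (intro card_mono) simp_all
    hence "q ^ h * card (L i \<inter> W) \<le> q ^ h * q ^ b" using b(1) by simp
    moreover have "q ^ (2 * h) \<le> q ^ h * card (L i \<inter> W)" using Abound[OF ksL[OF i(1)]] cardL[OF i(1)] by simp
    ultimately have "q ^ (2 * h) \<le> q ^ h * q ^ b" by (rule le_trans[rotated])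
    hence "q ^ (2 * h) \<le> q ^ (h + b)" by (simp add: power_add)
    hence "2 * h \<le> h + b" by (rule power_le_imp_le_exp[OF q1])
    hence "h \<le> b" by simp
    hence fd: "q ^ h dvd f" using b(1) by (simp add: le_imp_power_dvd)
    have "q ^ h dvd pts j" if j: "j < q" for j
    proof (cases "L j \<inter> W \<subseteq> F")
      case True thus ?thesis using caseA[OF j] by simp
    next
      case False thus ?thesis using caseB(2)[OF j] fd by simp
    qed
    hence "q ^ h dvd (\<Sum>i<q. pts i)" by (intro dvd_sum) simp
    thus ?thesis using hypcount by simp
  next
    case False
    hence "(\<Sum>i<q. pts i) = (\<Sum>i<q. f)" using caseB(2) by (intro sum.cong) auto
    also have "\<dots> = q ^ (Suc b)" using b(1) by simp
    finally have "(\<Sum>i<q. pts i) = q ^ Suc b" .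
    moreover have "h \<le> Suc b" using b(2) by simp
    ultimately have "q ^ h dvd (\<Sum>i<q. pts i)" by (metis le_imp_power_dvd)
    thus ?thesis using hypcount by simp
  qed
qed

end

definition np :: "('n \<Rightarrow> 'a::field) \<Rightarrow> ('n \<Rightarrow> 'a) \<Rightarrow> bool" where
  "np x y \<longleftrightarrow> (\<forall>a b. (\<forall>i. a * x i + b * y i = 0) \<longrightarrow> a = 0 \<and> b = 0)"

lemma np_nz: "np x y \<Longrightarrow> (\<lambda>i. x i + c * y i) \<noteq> 0"
proof
  assume np: "np x y" and z: "(\<lambda>i. x i + c * y i) = 0"
  have "\<forall>i. 1 * x i + c * y i = 0" using z by (simp add: fun_eq_iff)
  thus False using np unfolding np_def by (metis one_neq_zero)
qed

lemma F1_two: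
  fixes x y b0 :: "'n \<Rightarrow> 'a::field"
  assumes np: "np x y" and cc: "c \<noteq> c'"
    and e1: "\<And>i. x i + c * y i = al * b0 i" and e2: "\<And>i. x i + c' * y i = be * b0 i"
  shows False
proof -
  have "\<forall>i. (be - al) * x i + (be * c - al * c') * y i = 0"
  proof
    fix i
    have "(be - al) * x i + (be * c - al * c') * y i = be * (x i + c * y i) - al * (x i + c' * y i)"
      by (simp add: algebra_simps)
    also have "\<dots> = 0" using e1[of i] e2[of i] by simp
    finally show "(be - al) * x i + (be * c - al * c') * y i = 0" .
  qed
  hence "be - al = 0" "be * c - al * c' = 0" using np unfolding np_def by blast+
  hence "al * (c - c') = 0" by (simp add: algebra_simps)
  hence "al = 0" using cc by simp
  hence "\<forall>i. 1 * x i + c * y i = 0" using e1 by simp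
  thus False using np unfolding np_def by (metis one_neq_zero)
qed

lemma minor_field:
  fixes xi xj yi yj zi zj c lam :: "'a::field"
  assumes d: "xi * yj - xj * yi \<noteq> 0" and e1: "xi + c * yi = lam * zi" and e2: "xj + c * yj = lam * zj"
  shows "zj * yi - zi * yj \<noteq> 0 \<and> c = (zi * xj - zj * xi) / (zj * yi - zi * yj)"
proof -
  have h1: "c * (zj * yi - zi * yj) = zi * xj - zj * xi"
  proof -
    have "c * (zj * yi - zi * yj) - (zi * xj - zj * xi) = zj * (xi + c * yi) - zi * (xj + c * yj)"
      by (simp add: algebra_simps)
    also have "\<dots> = 0" unfolding e1 e2 by (simp add: algebra_simps)
    finally show ?thesis by simp
  qed
  have D: "zj * yi - zi * yj \<noteq> 0"
  proof
    assume D0: "zj * yi - zi * yj = 0"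
    hence N0: "zi * xj - zj * xi = 0" using h1 by simp
    have "(xi * yj - xj * yi) * zi = xi * (- (zj * yi - zi * yj)) - yi * (zi * xj - zj * xi)"
      by (simp add: algebra_simps)
    hence "(xi * yj - xj * yi) * zi = 0" using D0 N0 by simp
    hence zi: "zi = 0" using d by simp
    have "(xi * yj - xj * yi) * zj = xj * (- (zj * yi - zi * yj)) - yj * (zi * xj - zj * xi)"
      by (simp add: algebra_simps)
    hence "(xi * yj - xj * yi) * zj = 0" using D0 N0 by simp
    hence zj: "zj = 0" using d by simp
    have "xi = - c * yi" "xj = - c * yj" using e1 e2 zi zj by (simp_all add: eq_neg_iff_add_eq_0)
    hence "xi * yj - xj * yi = 0" by simp
    thus False using d by simp
  qed
  show ?thesis using D h1 by (simp add: field_simps)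
qed

lemma np_minor:
  fixes x y :: "'n \<Rightarrow> 'a::field"
  assumes np: "np x y" shows "\<exists>i j. x i * y j - x j * y i \<noteq> 0"
proof (rule ccontr)
  assume "\<not> ?thesis"
  hence all: "\<And>i j. x i * y j = x j * y i" by simp
  show False
  proof (cases "\<exists>k. y k \<noteq> 0")
    case True
    then obtain k where k: "y k \<noteq> 0" by blast
    have "\<forall>i. y k * x i + (- x k) * y i = 0" using all by (simp add: mult.commute)
    hence "y k = 0" using np unfolding np_def by blast
    thus False using k by simp
  next
    case False
    hence "\<forall>i. 0 * x i + 1 * y i = 0" by simp
    thus False using np unfolding np_def by (metis one_neq_zero)
  qed
qed

lemma c_in_K:
  assumes sf: "subfield K" and x: "x \<in> Kvec K" and y: "y \<in> Kvec K" and np: "np x y"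
    and z: "z \<in> Kvec K" and e: "(\<lambda>i. x i + c * y i) = (\<lambda>i. lam * z i)"
  shows "c \<in> K"
proof -
  obtain i j where d: "x i * y j - x j * y i \<noteq> 0" using np_minor[OF np] by blast
  have e1: "x i + c * y i = lam * z i" and e2: "x j + c * y j = lam * z j" using e by (simp_all add: fun_eq_iff)
  have m: "c = (z i * x j - z j * x i) / (z j * y i - z i * y j)" using minor_field[OF d e1 e2] by blast
  have inK: "x i \<in> K" "x j \<in> K" "y i \<in> K" "y j \<in> K" "z i \<in> K" "z j \<in> K"
    using x y z unfolding Kvec_def by auto
  show ?thesis unfolding m
    by (intro sf_div[OF sf] sf_diff[OF sf] sf_mult[OF sf]) (use inK in simp_all)
qed

lemma one_space:
  fixes F1 :: "('n \<Rightarrow> 'a::field) set"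
  assumes F1: "kspace UNIV 1 F1" shows "\<exists>b0. \<forall>z\<in>F1. \<exists>al. z = (\<lambda>i. al * b0 i)"
proof -
  obtain B where B: "kspan UNIV B = F1" "card B = 1" using F1 unfolding kspace_def by blast
  obtain b0 where b0: "B = {b0}" using B(2) by (rule card_1_singletonE)
  have "F1 = lcs UNIV {b0}" using kspan_lcs[OF subfield_UNIV, of "{b0}"] B(1) b0 by (simp add: Kvec_UNIV)
  hence "\<forall>z\<in>F1. \<exists>al. z = (\<lambda>i. al * b0 i)" unfolding lcs_def by auto
  thus ?thesis by blast
qed

lemma two_space:
  fixes L0 :: "('n \<Rightarrow> 'a::field) set"
  assumes L0: "kspace UNIV 2 L0" shows "\<exists>u w. u \<in> L0 \<and> w \<in> L0 \<and> np u w"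
proof -
  obtain B where B: "B \<subseteq> L0" "kindep UNIV B" "card B = 2" using L0 unfolding kspace_def by blast
  obtain u w where uw: "B = {u, w}" "u \<noteq> w" using B(3) unfolding card_2_iff by blast
  have "np u w" unfolding np_def
  proof (intro allI impI)
    fix a b :: 'a assume h: "\<forall>i. a * u i + b * w i = 0"
    define c where "c z = (if z = u then a else b)" for z
    have z: "(\<lambda>i. \<Sum>z\<in>B. c z * z i) = (\<lambda>i. 0)"
    proof
      fix i
      have "(\<Sum>z\<in>B. c z * z i) = c u * u i + c w * w i" unfolding uw(1) using uw(2) by simp
      also have "\<dots> = a * u i + b * w i" unfolding c_def using uw(2) by simp
      finally show "(\<Sum>z\<in>B. c z * z i) = 0" using h by simp
    qed
    have cK: "\<forall>z\<in>B. c z \<in> UNIV" by simp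
    have k: "\<forall>c. (\<forall>b\<in>B. c b \<in> UNIV) \<and> (\<lambda>i. \<Sum>b\<in>B. c b * b i) = (\<lambda>i. 0) \<longrightarrow> (\<forall>b\<in>B. c b = 0)"
      using B(2) unfolding kindep_def by (rule conjunct2)
    have "\<forall>z\<in>B. c z = 0" using spec[OF k, of c] z cK by blast
    hence "c u = 0" "c w = 0" unfolding uw(1) by simp_all
    thus "a = 0 \<and> b = 0" unfolding c_def using uw(2) by simp
  qed
  moreover have "u \<in> L0" "w \<in> L0" using B(1) uw(1) by auto
  ultimately show ?thesis by blast
qed

lemma vec_lc: "(\<lambda>i. x i + c * y i) = x + (\<lambda>i. c * y i)" by (simp add: fun_eq_iff)

context cyl
begin

lemma noncyl: "\<not> is_cylinder UNIV 1 (mset_set (Ex ` set_mset M))"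
proof
  assume "is_cylinder UNIV 1 (mset_set (Ex ` set_mset M))"
  then obtain F1 L1 where F1: "kspace UNIV 1 F1"
    and L1: "\<forall>i<card (UNIV::'a set). kspace UNIV (1 + 1) (L1 i) \<and> F1 \<subseteq> L1 i"
    and Meq: "mset_set (Ex ` set_mset M) = (\<Sum>i<card (UNIV::'a set). mset_set {P \<in> kpoints UNIV. P \<subseteq> L1 i \<and> \<not> P \<subseteq> F1})"
    unfolding is_cylinder_def by blast
  define S where "S = Ex ` set_mset M"
  define L0 where "L0 = L1 0"
  have pos: "0 < card (UNIV::'a set)" by (rule finite_UNIV_card_ge_0) simp
  have inS: "P \<in> S" if P: "P \<in> kpoints UNIV" "P \<subseteq> L0" "\<not> P \<subseteq> F1" for P
  proof -
    have "P \<in> (\<Union>i\<in>{..<card (UNIV::'a set)}. set_mset (mset_set {P \<in> kpoints UNIV. P \<subseteq> L1 i \<and> \<not> P \<subseteq> F1}))"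
      using P pos unfolding L0_def by auto
    hence "P \<in> set_mset (mset_set S)" unfolding S_def Meq by (simp add: set_mset_sum)
    thus ?thesis by simp
  qed
  have L0sp: "kspace UNIV (1 + 1) L0" using L1 pos unfolding L0_def by blast
  hence L0sp: "kspace UNIV 2 L0" by (simp only: one_add_one)
  have ksL0: "ksubspace UNIV L0" using L0sp unfolding kspace_def by blast
  have ksF1: "ksubspace UNIV F1" using F1 unfolding kspace_def by blast
  obtain b0 where b0: "\<forall>z\<in>F1. \<exists>al. z = (\<lambda>i. al * b0 i)" using one_space[OF F1] by blast
  have good: "\<exists>c0. \<forall>c. c \<noteq> c0 \<longrightarrow> kpoint UNIV (\<lambda>i. x i + c * y i) \<in> S"
    if xy: "x \<in> L0" "y \<in> L0" "np x y" for x y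
  proof -
    have pt: "kpoint UNIV (\<lambda>i. x i + c * y i) \<in> S" if nF: "(\<lambda>i. x i + c * y i) \<notin> F1" for c
    proof (rule inS)
      show "kpoint UNIV (\<lambda>i. x i + c * y i) \<in> kpoints UNIV"
        unfolding kpoints_iff Kvec_UNIV using np_nz[OF xy(3)] by blast
      have "(\<lambda>i. x i + c * y i) \<in> L0" unfolding vec_lc
        using ks_add[OF ksL0 xy(1) ks_smult[OF ksL0 _ xy(2)]] by simp
      thus "kpoint UNIV (\<lambda>i. x i + c * y i) \<subseteq> L0" using kp_sub_iff[OF subfield_UNIV ksL0] by simp
      show "\<not> kpoint UNIV (\<lambda>i. x i + c * y i) \<subseteq> F1" using nF kp_sub_iff[OF subfield_UNIV ksF1] by simp
    qed
    show ?thesis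
    proof (cases "\<exists>c0. (\<lambda>i. x i + c0 * y i) \<in> F1")
      case True
      then obtain c0 where c0: "(\<lambda>i. x i + c0 * y i) \<in> F1" by blast
      have "(\<lambda>i. x i + c * y i) \<notin> F1" if c: "c \<noteq> c0" for c
      proof
        assume "(\<lambda>i. x i + c * y i) \<in> F1"
        then obtain al where al: "(\<lambda>i. x i + c * y i) = (\<lambda>i. al * b0 i)" using b0 by blast
        obtain be where be: "(\<lambda>i. x i + c0 * y i) = (\<lambda>i. be * b0 i)" using b0 c0 by blast
        show False
          by (rule F1_two[OF xy(3) c, of al b0 be]) (use al be in \<open>simp_all add: fun_eq_iff\<close>)
      qed
      thus ?thesis using pt by blast
    next
      case False
      thus ?thesis using pt by blast
    qed
  qed
  have qq: "card (UNIV :: 'a set) \<ge> q + 2"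
  proof -
    have "q ^ 2 \<le> q ^ h" using h2 q2 by (intro power_increasing) simp_all
    moreover have "q + 2 \<le> q ^ 2"
    proof -
      have "2 * q \<le> q * q" using q2 by (rule mult_le_mono1)
      moreover have "q + 2 \<le> 2 * q" using q2 by simp
      moreover have "q ^ 2 = q * q" by (simp add: power2_eq_square)
      ultimately show ?thesis by linarith
    qed
    ultimately show ?thesis using cU by simp
  qed
  have ne2: "UNIV - {a, b} \<noteq> ({} :: 'a set)" for a b
  proof
    assume "UNIV - {a, b} = ({} :: 'a set)"
    hence "(UNIV :: 'a set) \<subseteq> {a, b}" by blast
    hence "card (UNIV :: 'a set) \<le> card {a, b}" by (intro card_mono) simp_all
    also have "card {a, b} \<le> 2" by (simp add: card_insert_if)
    finally show False using qq q2 by simp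
  qed
  obtain u w where uw: "u \<in> L0" "w \<in> L0" "np u w" using two_space[OF L0sp] by blast
  obtain c0 where c0: "\<forall>c. c \<noteq> c0 \<longrightarrow> kpoint UNIV (\<lambda>i. u i + c * w i) \<in> S" using good[OF uw] by blast
  obtain c1 where c1: "c1 \<noteq> c0" using ne2[of c0 c0] by blast
  obtain c2 where c2: "c2 \<noteq> c0" "c2 \<noteq> c1" using ne2[of c0 c1] by blast
  have rep: "\<exists>x al. x \<in> Kvec K \<and> al \<noteq> 0 \<and> x = (\<lambda>i. al * (u i + c * w i))" if c: "c \<noteq> c0" for c
  proof -
    have "kpoint UNIV (\<lambda>i. u i + c * w i) \<in> S" using c0 c by blast
    then obtain x where x: "x \<in> Kvec K" "x \<noteq> (\<lambda>i. 0)" "kpoint UNIV x = kpoint UNIV (\<lambda>i. u i + c * w i)"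
      unfolding S_def S_eq[symmetric] by blast
    have "x \<in> kpoint UNIV (\<lambda>i. u i + c * w i)" using x(3) kp_self[OF subfield_UNIV, of x] by simp
    then obtain al where al: "x = (\<lambda>i. al * (u i + c * w i))" unfolding kpoint_def by blast
    have "al \<noteq> 0" using al x(2) by auto
    thus ?thesis using al x(1) by blast
  qed
  obtain x al where x: "x \<in> Kvec K" "al \<noteq> 0" "x = (\<lambda>i. al * (u i + c1 * w i))" using rep[OF c1] by blast
  obtain y be where y: "y \<in> Kvec K" "be \<noteq> 0" "y = (\<lambda>i. be * (u i + c2 * w i))" using rep[OF c2(1)] by blast
  have npxy: "np x y" unfolding np_def
  proof (intro allI impI)
    fix a b assume h: "\<forall>i. a * x i + b * y i = 0"
    have "\<forall>i. (a * al + b * be) * u i + (a * al * c1 + b * be * c2) * w i = 0"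
    proof
      fix i
      have "(a * al + b * be) * u i + (a * al * c1 + b * be * c2) * w i = a * x i + b * y i"
        unfolding x(3) y(3) by (simp add: algebra_simps)
      thus "(a * al + b * be) * u i + (a * al * c1 + b * be * c2) * w i = 0" using h by simp
    qed
    hence s: "a * al + b * be = 0" "a * al * c1 + b * be * c2 = 0" using uw(3) unfolding np_def by blast+
    have bb: "b * be = - (a * al)" using s(1) by (simp add: eq_neg_iff_add_eq_0 add.commute)
    have "(a * al) * (c1 - c2) = a * al * c1 + (- (a * al)) * c2" by (simp add: algebra_simps)
    also have "\<dots> = a * al * c1 + b * be * c2" unfolding bb ..
    also have "\<dots> = 0" by (rule s(2))
    finally have "(a * al) * (c1 - c2) = 0" .
    hence "a * al = 0" using c2(2) by simp
    hence a0: "a = 0" using x(2) by simp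
    hence "b * be = 0" using s(1) by simp
    thus "a = 0 \<and> b = 0" using a0 y(2) by simp
  qed
  have xL: "x \<in> L0"
  proof -
    have "(\<lambda>i. u i + c1 * w i) \<in> L0" unfolding vec_lc using ks_add[OF ksL0 uw(1) ks_smult[OF ksL0 _ uw(2)]] by simp
    thus ?thesis unfolding x(3) using ks_smult[OF ksL0, of al] by simp
  qed
  have yL: "y \<in> L0"
  proof -
    have "(\<lambda>i. u i + c2 * w i) \<in> L0" unfolding vec_lc using ks_add[OF ksL0 uw(1) ks_smult[OF ksL0 _ uw(2)]] by simp
    thus ?thesis unfolding y(3) using ks_smult[OF ksL0, of be] by simp
  qed
  obtain d0 where d0: "\<forall>c. c \<noteq> d0 \<longrightarrow> kpoint UNIV (\<lambda>i. x i + c * y i) \<in> S" using good[OF xL yL npxy] by blast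
  have "UNIV - {d0} \<subseteq> K"
  proof
    fix c assume "c \<in> UNIV - {d0}"
    hence "kpoint UNIV (\<lambda>i. x i + c * y i) \<in> S" using d0 by blast
    then obtain z where z: "z \<in> Kvec K" "kpoint UNIV z = kpoint UNIV (\<lambda>i. x i + c * y i)"
      unfolding S_def S_eq[symmetric] by blast
    have "(\<lambda>i. x i + c * y i) \<in> kpoint UNIV z" using z(2) kp_self[OF subfield_UNIV, of "\<lambda>i. x i + c * y i"] by simp
    then obtain lam where "(\<lambda>i. x i + c * y i) = (\<lambda>i. lam * z i)" unfolding kpoint_def by blast
    thus "c \<in> K" by (rule c_in_K[OF sf x(1) y(1) npxy z(1)])
  qed
  hence "card (UNIV - {d0}) \<le> card K" by (intro card_mono) simp_all
  hence "card (UNIV :: 'a set) - 1 \<le> q" using cK by simp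
  thus False using qq by simp
qed

end

theorem mainTheorem12:
  fixes K :: "'a::{field,finite} set" and M :: "('n::finite \<Rightarrow> 'a) set multiset"
    and q h :: nat and S :: "('n \<Rightarrow> 'a) set set"
  assumes "\<exists>p k. prime p \<and> k \<ge> 1 \<and> q = p ^ k"
    and "h \<ge> 2"
    and "subfield K" and "card K = q" and "card (UNIV :: 'a set) = q ^ h"
    and "is_cylinder K (2 * h - 1) M"
    and "\<forall>P. count M P \<le> 1"
    and "spanning K (set_mset M)"
  defines "S \<equiv> {kpoint UNIV x | x. x \<in> Kvec K \<and> x \<noteq> (\<lambda>i. 0) \<and> kpoint K x \<in> set_mset M}"
  shows "S \<subseteq> kpoints UNIV \<and> spanning UNIV S \<and> card S = (q ^ h) ^ 2
    \<and> pg_divisible UNIV 1 S \<and> \<not> is_cylinder UNIV 1 (mset_set S)"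
proof -
  obtain p k where pk: "prime p" "k \<ge> 1" "q = p ^ k" using assms(1) by blast
  have "p \<ge> 2" using pk(1) by (rule prime_ge_2_nat)
  moreover have "p \<le> p ^ k" using pk(2) \<open>p \<ge> 2\<close> by (intro self_le_power) simp_all
  ultimately have q2: "q \<ge> 2" using pk(3) by simp
  have e: "2 * h - 1 + 1 = 2 * h" using assms(2) by simp
  obtain F L where sz: "size M = card K ^ (2 * h - 1 + 1)" and Fsp: "kspace K (2 * h - 1) F"
    and L: "\<forall>i<card K. kspace K (2 * h - 1 + 1) (L i) \<and> F \<subseteq> L i"
    and Mdef: "M = (\<Sum>i<card K. mset_set {P \<in> kpoints K. P \<subseteq> L i \<and> \<not> P \<subseteq> F})"
    using assms(6) unfolding is_cylinder_def by blast
  interpret cyl K M q h F L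
  proof
    show "q \<ge> 2" by (rule q2)
    show "h \<ge> 2" by (rule assms(2))
    show "subfield K" by (rule assms(3))
    show "card K = q" by (rule assms(4))
    show "card (UNIV :: 'a set) = q ^ h" by (rule assms(5))
    show "kspace K (2 * h - 1) F" by (rule Fsp)
    show "\<And>i. i < q \<Longrightarrow> kspace K (2 * h) (L i)" using L assms(4) e by metis
    show "\<And>i. i < q \<Longrightarrow> F \<subseteq> L i" using L assms(4) by blast
    show "M = (\<Sum>i<q. mset_set {P \<in> kpoints K. P \<subseteq> L i \<and> \<not> P \<subseteq> F})" using Mdef assms(4) by simp
    show "size M = q ^ (2 * h)" using sz assms(4) e by simp
    show "\<forall>P. count M P \<le> 1" by (rule assms(7))
    show "spanning K (set_mset M)" by (rule assms(8))
  qed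
  have SE: "S = Ex ` set_mset M" unfolding assms(9) by (rule S_eq)
  have 1: "S \<subseteq> kpoints UNIV" unfolding assms(9) kpoints_def Kvec_UNIV by blast
  have 2: "spanning UNIV S" unfolding SE by (rule spanningS)
  have cS: "card S = q ^ (2 * h)" unfolding SE by (rule card_S)
  have 3: "card S = (q ^ h) ^ 2" unfolding cS by (simp add: power_mult[symmetric] mult.commute)
  have 4: "pg_divisible UNIV 1 S" unfolding pg_divisible_def
  proof (intro allI impI)
    fix H :: "('n \<Rightarrow> 'a) set" assume H: "kspace UNIV (card (UNIV :: 'n set) - 1) H"
    interpret hyp K M q h F L H by unfold_locales (rule H)
    have "q ^ h dvd card {P \<in> S. P \<subseteq> H}" unfolding SE by (rule hyp_dvd)
    moreover have "q ^ h dvd card S" unfolding cS using assms(2) by (simp add: le_imp_power_dvd)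
    ultimately show "card {P \<in> S. P \<subseteq> H} mod card (UNIV :: 'a set) ^ 1 = card S mod card (UNIV :: 'a set) ^ 1"
      using assms(5) by simp
  qed
  have 5: "\<not> is_cylinder UNIV 1 (mset_set S)" unfolding SE by (rule noncyl)
  show ?thesis using 1 2 3 4 5 by blast
qed

end
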